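(* Let $\mathcal O\subset\Xi$ be measurable with $\nu(\mathcal O)=+\infty$ and $\psi:\mathcal O\to(0,\infty)$ measurable. Assume there exists $\alpha\in(0,1)$ such that the limit $$r_1=\lim_{\lambda\to+\infty}\frac{1}{\lambda^\alpha}\int_{\mathcal O}\big(e^{-\lambda\psi(u)}-1\big)\,\nu(du)$$ exists and belongs to $(-\infty,0)$. Then for every $t>0$, $$\Big(\int_0^t\int_{\mathcal O}\psi(u)\,N(ds,du)\Big)^{-1}\in\bigcap_{p\ge1}L^p(\mathbb P).$$
   Context: $(\Xi,\mathcal X,\nu)$ is a measure space with $\nu$ $\sigma$-finite, and $N$ is a Poisson random measure on $[0,\infty)\times\Xi$ with intensity $dt\times\nu$ defined on a probability space $(\Omega,\mathcal A,\mathbb P)$. *)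

theory Defs
  imports "HOL-Probability.Probability"
begin

definition time_space_intensity :: "'x measure \<Rightarrow> (real \<times> 'x) measure" where
  "time_space_intensity \<nu> = restrict_space lborel {0..} \<Otimes>\<^sub>M \<nu>"

definition poisson_random_measure ::
  "'w measure \<Rightarrow> 'e measure \<Rightarrow> ('w \<Rightarrow> 'e measure) \<Rightarrow> bool" where
  "poisson_random_measure P \<mu> N \<longleftrightarrow>
     prob_space P \<and>
     (\<forall>\<omega>\<in>space P. sets (N \<omega>) = sets \<mu>) \<and>
     (\<forall>A\<in>sets \<mu>. (\<lambda>\<omega>. emeasure (N \<omega>) A) \<in> borel_measurable P) \<and>
     (\<forall>A\<in>sets \<mu>. emeasure \<mu> A < \<infinity> \<longrightarrow>
        (\<forall>k::nat. \<P>(\<omega> in P. emeasure (N \<omega>) A = of_nat k)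
            = exp (- enn2real (emeasure \<mu> A)) * enn2real (emeasure \<mu> A) ^ k / fact k)) \<and>
     (\<forall>A\<in>sets \<mu>. emeasure \<mu> A = \<infinity> \<longrightarrow> (AE \<omega> in P. emeasure (N \<omega>) A = \<infinity>)) \<and>
     (\<forall>(I::nat set) A. finite I \<longrightarrow> A ` I \<subseteq> sets \<mu> \<longrightarrow> disjoint_family_on A I \<longrightarrow>
        prob_space.indep_vars P (\<lambda>_. borel) (\<lambda>i \<omega>. emeasure (N \<omega>) (A i)) I)"

end

theory Submission
  imports Defs "HOL-Real_Asymp.Real_Asymp"
begin


lemma mcong_help:
  assumes "\<forall>\<omega>\<in>space P. F \<omega> = G \<omega>" "G \<in> borel_measurable P"
  shows "F \<in> borel_measurable P"
  using measurable_cong[of P F G borel] assms by blast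

lemma kernel_nn_integral_measurable:
  assumes sets_eq: "\<And>\<omega>. \<omega> \<in> space P \<Longrightarrow> sets (N \<omega>) = sets M"
    and meas: "\<And>A. A \<in> sets M \<Longrightarrow> (\<lambda>\<omega>. emeasure (N \<omega>) A) \<in> borel_measurable P"
    and f: "f \<in> borel_measurable M"
  shows "(\<lambda>\<omega>. \<integral>\<^sup>+ z. f z \<partial>N \<omega>) \<in> borel_measurable P"
  using f
proof -
  have mN: "g \<in> borel_measurable (N \<omega>)" if "\<omega> \<in> space P" "g \<in> borel_measurable M" for g \<omega>
    using measurable_cong_sets[OF sets_eq[OF that(1)] refl, of borel] that(2) by blast
  show ?thesis using f
proof (induct rule: borel_measurable_induct)
  case (cong f g)
  have "\<forall>\<omega>\<in>space P. (\<integral>\<^sup>+ z. f z \<partial>N \<omega>) = (\<integral>\<^sup>+ z. g z \<partial>N \<omega>)"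
    using cong(3) sets_eq_imp_space_eq[OF sets_eq] by (intro ballI nn_integral_cong) simp
  then show ?case using cong(4) by (rule mcong_help)
next
  case (set A)
  have eq: "\<forall>\<omega>\<in>space P. (\<integral>\<^sup>+ z. indicator A z \<partial>N \<omega>) = emeasure (N \<omega>) A"
    using set sets_eq by (intro ballI nn_integral_indicator) auto
  show ?case
    by (rule mcong_help[where G="\<lambda>\<omega>. emeasure (N \<omega>) A", OF eq meas[OF set]])
next
  case (mult u c)
  have "\<forall>\<omega>\<in>space P. (\<integral>\<^sup>+ z. c * u z \<partial>N \<omega>) = c * (\<integral>\<^sup>+ z. u z \<partial>N \<omega>)"
    using mult sets_eq by (intro ballI, subst nn_integral_cmult) (auto intro: mN)
  moreover have "(\<lambda>\<omega>. c * (\<integral>\<^sup>+ z. u z \<partial>N \<omega>)) \<in> borel_measurable P" using mult(4) by (intro borel_measurable_times_ennreal) auto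
  ultimately show ?case by (rule mcong_help)
next
  case (add u v)
  have "\<forall>\<omega>\<in>space P. (\<integral>\<^sup>+ z. v z + u z \<partial>N \<omega>) = (\<integral>\<^sup>+ z. v z \<partial>N \<omega>) + (\<integral>\<^sup>+ z. u z \<partial>N \<omega>)"
    using add sets_eq by (intro ballI, subst nn_integral_add) (auto intro: mN)
  moreover have "(\<lambda>\<omega>. (\<integral>\<^sup>+ z. v z \<partial>N \<omega>) + (\<integral>\<^sup>+ z. u z \<partial>N \<omega>)) \<in> borel_measurable P"
    using add(3) add(7) by (intro borel_measurable_add) auto
  ultimately show ?case by (rule mcong_help)
next
  case (seq U)
  have "\<forall>\<omega>\<in>space P. (\<integral>\<^sup>+ z. (SUP i. U i) z \<partial>N \<omega>) = (SUP i. \<integral>\<^sup>+ z. U i z \<partial>N \<omega>)"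
    using seq sets_eq unfolding SUP_apply
    by (intro ballI, subst nn_integral_monotone_convergence_SUP) (auto intro: mN)
  moreover have "(\<lambda>\<omega>. SUP i. \<integral>\<^sup>+ z. U i z \<partial>N \<omega>) \<in> borel_measurable P"
    using seq(3) by (intro borel_measurable_SUP) auto
  ultimately show ?case by (rule mcong_help)
qed
qed



lemma exp_neg_le: assumes "0 \<le> (y::real)" "y \<le> 1" shows "exp (-y) \<le> 1 - y/2"
proof -
  have e: "1 + y \<le> exp y" using exp_ge_add_one_self[of y] by simp
  have "exp (-y) = 1 / exp y" by (simp add: exp_minus field_simps)
  also have "\<dots> \<le> 1 / (1 + y)" using e assms by (intro divide_left_mono) auto
  also have "\<dots> \<le> 1 - y/2" proof -
    have "y*y \<le> y*1" using assms by (intro mult_left_mono) auto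
    then have "1 \<le> (1 - y/2)*(1+y)" by (simp add: algebra_simps)
    then show ?thesis using assms by (simp add: pos_divide_le_eq)
  qed
  finally show ?thesis .
qed

lemma key_ineq:
  fixes x l \<eta> :: real
  assumes "0 < x" "0 < l" "0 < \<eta>" "\<eta> \<le> 1"
  shows "1 - exp (-l*x) \<le> (if \<eta>/l \<le> x then 1 else 0) + 2*\<eta>*(1 - exp (-(l/\<eta>)*x))"
proof (cases "\<eta>/l \<le> x")
  case True
  have "exp (-(l/\<eta>)*x) \<le> 1" using assms by simp
  then have "0 \<le> 2*\<eta>*(1 - exp (-(l/\<eta>)*x))" using assms by simp
  moreover have "0 < exp (-l*x)" by simp
  moreover have "(if \<eta>/l \<le> x then 1 else 0) = (1::real)" using True by simp
  ultimately show ?thesis by linarith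
next
  case False
  define y where "y = l*x/\<eta>"
  have y: "0 \<le> y" "y \<le> 1" using False assms by (auto simp: y_def field_simps)
  have "1 - exp (-l*x) \<le> l*x" using exp_ge_add_one_self[of "-l*x"] by simp
  also have "\<dots> = 2*\<eta>*(y/2)" using assms by (simp add: y_def)
  also have "\<dots> \<le> 2*\<eta>*(1 - exp (-y))" using exp_neg_le[OF y] assms by simp
  also have "exp (-y) = exp (-(l/\<eta>)*x)" by (simp add: y_def)
  finally show ?thesis using False by simp
qed



lemma sets_level:
  fixes \<psi> :: "'a \<Rightarrow> real"
  assumes Oc: "Oc \<in> sets \<nu>" and \<psi>m: "\<psi> \<in> borel_measurable (restrict_space \<nu> Oc)"
  shows "{u\<in>Oc. c \<le> \<psi> u} \<in> sets \<nu>"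
proof -
  have "{u\<in>space (restrict_space \<nu> Oc). c \<le> \<psi> u} \<in> sets (restrict_space \<nu> Oc)"
    using measurable_sets[OF \<psi>m, of "{c..}"] atLeast_borel[of c] by (simp add: vimage_def Int_def conj_commute)
  moreover have "space (restrict_space \<nu> Oc) = Oc" using Oc sets.sets_into_space by (auto simp: space_restrict_space)
  ultimately have "{u\<in>Oc. c \<le> \<psi> u} \<in> sets (restrict_space \<nu> Oc)" by simp
  then show ?thesis using Oc by (simp add: sets_restrict_space_iff)
qed

lemma measure_lower_bound:
  fixes \<nu> :: "'x measure" and Oc :: "'x set" and \<psi> :: "'x \<Rightarrow> real"
  assumes Oc: "Oc \<in> sets \<nu>" and \<psi>m: "\<psi> \<in> borel_measurable (restrict_space \<nu> Oc)"
    and pos: "\<forall>u\<in>Oc. 0 < \<psi> u"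
    and \<alpha>: "0 < \<alpha>" "\<alpha> < 1" and r1: "r1 < 0"
    and int: "\<forall>\<^sub>F l in at_top. set_integrable \<nu> Oc (\<lambda>u. exp (- l * \<psi> u) - 1)"
    and lim: "((\<lambda>l. (LINT u:Oc|\<nu>. exp (- l * \<psi> u) - 1) / l powr \<alpha>) \<longlongrightarrow> r1) at_top"
  shows "\<exists>\<eta>>0. \<exists>L0>0. \<forall>l\<ge>L0. ennreal (- r1/2 * l powr \<alpha>) \<le> emeasure \<nu> {u\<in>Oc. \<eta>/l \<le> \<psi> u}"
proof -
  define \<eta> where "\<eta> = (1/10::real) powr (1/(1-\<alpha>))"
  have \<eta>0: "0 < \<eta>" by (simp add: \<eta>_def)
  have \<eta>1: "\<eta> \<le> 1" unfolding \<eta>_def using \<alpha> by (intro powr_le1) auto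
  have \<eta>p: "\<eta> powr (1-\<alpha>) = 1/10" unfolding \<eta>_def using \<alpha> by (simp add: powr_powr)
  define g where "g l = (LINT u:Oc|\<nu>. exp (- l * \<psi> u) - 1)" for l
  define a where "a l = g l / l powr \<alpha>" for l
  have "\<forall>\<^sub>F l in at_top. a l < 3/4*r1"
    using order_tendstoD(2)[OF lim, of "3/4*r1"] r1 by (simp add: a_def g_def)
  then obtain N1 where N1: "\<And>l. l \<ge> N1 \<Longrightarrow> a l < 3/4*r1" by (auto simp: eventually_at_top_linorder)
  have "\<forall>\<^sub>F l in at_top. 5/4*r1 < a l"
    using order_tendstoD(1)[OF lim, of "5/4*r1"] r1 by (simp add: a_def g_def)
  then obtain N2 where N2: "\<And>l. l \<ge> N2 \<Longrightarrow> 5/4*r1 < a l" by (auto simp: eventually_at_top_linorder)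
  obtain N3 where N3: "\<And>l. l \<ge> N3 \<Longrightarrow> set_integrable \<nu> Oc (\<lambda>u. exp (- l * \<psi> u) - 1)"
    using int by (auto simp: eventually_at_top_linorder)
  define L0 where "L0 = max 1 (max N1 (max (N2*\<eta>) (max N3 (N3*\<eta>))))"
  have "\<forall>l\<ge>L0. ennreal (- r1/2 * l powr \<alpha>) \<le> emeasure \<nu> {u\<in>Oc. \<eta>/l \<le> \<psi> u}"
  proof (intro allI impI)
    fix l assume l: "L0 \<le> l"
    have l0: "0 < l" using l by (simp add: L0_def)
    have lN1: "N1 \<le> l" and lN2: "N2 \<le> l/\<eta>" and lN3: "N3 \<le> l" and lN3': "N3 \<le> l/\<eta>"
      using l \<eta>0 by (auto simp: L0_def pos_le_divide_eq)
    define S where "S = {u\<in>Oc. \<eta>/l \<le> \<psi> u}"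
    have S: "S \<in> sets \<nu>" unfolding S_def by (rule sets_level[OF Oc \<psi>m])
    show "ennreal (- r1/2 * l powr \<alpha>) \<le> emeasure \<nu> {u\<in>Oc. \<eta>/l \<le> \<psi> u}"
    proof (cases "emeasure \<nu> S = \<infinity>")
      case True then show ?thesis by (simp add: S_def)
    next
      case False
      then have Sfin: "emeasure \<nu> S < \<infinity>" by (simp add: top.not_eq_extremum)
      define h where "h k u = indicator Oc u *\<^sub>R (exp (- k * \<psi> u) - 1)" for k u
      have ih1: "integrable \<nu> (h l)" using N3[OF lN3] unfolding set_integrable_def h_def[abs_def] by simp
      have ih2: "integrable \<nu> (h (l/\<eta>))" using N3[OF lN3'] unfolding set_integrable_def h_def[abs_def] by simp
      have gh: "g k = integral\<^sup>L \<nu> (h k)" for k unfolding g_def h_def[abs_def] set_lebesgue_integral_def by simp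
      have iS: "integrable \<nu> (indicator S :: 'x \<Rightarrow> real)" using S Sfin by (rule integrable_real_indicator)
      have pw: "- h l u \<le> indicator S u + 2*\<eta>*(- h (l/\<eta>) u)" for u
      proof (cases "u \<in> Oc")
        case True
        have "1 - exp (-l*\<psi> u) \<le> (if \<eta>/l \<le> \<psi> u then 1 else 0) + 2*\<eta>*(1 - exp (-(l/\<eta>)*\<psi> u))"
          using key_ineq[of "\<psi> u" l \<eta>] True pos l0 \<eta>0 \<eta>1 by auto
        then show ?thesis using True by (cases "\<eta>/l \<le> \<psi> u") (auto simp: h_def S_def indicator_def)
      qed (simp add: h_def)
      have "integral\<^sup>L \<nu> (\<lambda>u. - h l u) \<le> integral\<^sup>L \<nu> (\<lambda>u. indicator S u + 2*\<eta>*(- h (l/\<eta>) u))"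
        using pw ih1 ih2 iS by (intro integral_mono) auto
      also have "\<dots> = measure \<nu> S - 2*\<eta>*g (l/\<eta>)"
        using ih2 iS S Sfin by (simp add: gh)
      finally have ineq: "- g l \<le> measure \<nu> S - 2*\<eta>*g (l/\<eta>)" by (simp add: gh)
      have lp: "0 < l powr \<alpha>" using l0 by simp
      have e1: "g l = a l * l powr \<alpha>" using lp by (simp add: a_def)
      have e2: "g (l/\<eta>) = a (l/\<eta>) * (l powr \<alpha> / \<eta> powr \<alpha>)"
        using l0 \<eta>0 by (simp add: a_def powr_divide)
      have e3: "2*\<eta>/\<eta> powr \<alpha> = 1/5"
        using \<eta>p \<eta>0 by (simp add: powr_diff)
      have "2*\<eta>*g (l/\<eta>) = a (l/\<eta>) * l powr \<alpha> * (2*\<eta>/\<eta> powr \<alpha>)" by (simp add: e2)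
      then have e4: "2*\<eta>*g (l/\<eta>) = a (l/\<eta>) * l powr \<alpha> / 5" using e3 by simp
      have b1: "a l * l powr \<alpha> \<le> 3/4*r1 * l powr \<alpha>" using N1[OF lN1] lp by (intro mult_right_mono) auto
      have b2: "5/4*r1 * l powr \<alpha> \<le> a (l/\<eta>) * l powr \<alpha>" using N2[OF lN2] lp by (intro mult_right_mono) auto
      have "- r1/2 * l powr \<alpha> \<le> measure \<nu> S" using ineq e1 e4 b1 b2 by (simp add: algebra_simps) 
      then have "ennreal (- r1/2 * l powr \<alpha>) \<le> ennreal (measure \<nu> S)" by (rule ennreal_leI)
      also have "\<dots> = emeasure \<nu> S" using Sfin by (simp add: emeasure_eq_ennreal_measure)
      finally show ?thesis by (simp add: S_def)
    qed
  qed
  moreover have "0 < L0" by (simp add: L0_def)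
  ultimately show ?thesis using \<eta>0 by blast
qed



lemma summable_b:
  fixes c \<alpha> p :: real
  assumes "0 < c" "0 < \<alpha>"
  shows "summable (\<lambda>n::nat. (real n + 1) powr p * exp (- c * real n powr \<alpha>))"
proof -
  have lim: "((\<lambda>n::nat. (real n + 1) powr p * exp (- c * real n powr \<alpha>) * (real n)^2) \<longlongrightarrow> 0) at_top"
    using assms by real_asymp
  have "\<forall>\<^sub>F n in sequentially. (real n + 1) powr p * exp (- c * real n powr \<alpha>) * (real n)^2 < 1"
    using order_tendstoD(2)[OF lim] by simp
  moreover have "\<forall>\<^sub>F n in sequentially. (1::nat) \<le> n" by (rule eventually_ge_at_top)
  ultimately have "\<forall>\<^sub>F n in sequentially. norm ((real n + 1) powr p * exp (- c * real n powr \<alpha>)) \<le> inverse (real n ^ 2)"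
  proof eventually_elim
    case (elim n)
    then have "0 < real n ^ 2" by simp
    then show ?case using elim(1) by (simp add: field_simps)
  qed
  then show ?thesis
    by (rule summable_comparison_test_ev) (rule inverse_power_summable, simp)
qed

lemma integrable_tail:
  fixes Y :: "'w \<Rightarrow> real"
  assumes P: "prob_space P" and Ym: "Y \<in> borel_measurable P" and Y0: "\<forall>\<omega>\<in>space P. 0 \<le> Y \<omega>"
    and c: "0 < c" and \<alpha>: "0 < \<alpha>" and p: "0 \<le> p"
    and tail: "\<forall>y\<ge>y0. measure P {\<omega>\<in>space P. y \<le> Y \<omega>} \<le> exp (- c * y powr \<alpha>)"
  shows "integrable P (\<lambda>\<omega>. Y \<omega> powr p)"
proof -
  interpret prob_space P by fact
  define b where "b n = (real n + 1) powr p * exp (- c * real n powr \<alpha>)" for n::nat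
  define E where "E n = {\<omega>\<in>space P. real n \<le> Y \<omega>}" for n::nat
  have E: "E n \<in> sets P" for n unfolding E_def using Ym by measurable
  define a where "a n = (real n + 1) powr p * prob (E n)" for n
  have sb: "summable b" unfolding b_def using c \<alpha> by (rule summable_b)
  have "\<forall>\<^sub>F n in sequentially. norm (a n) \<le> b n"
  proof -
    have "\<forall>\<^sub>F n in sequentially. y0 \<le> real n" by real_asymp
    then show ?thesis
    proof eventually_elim
      case (elim n)
      have "prob (E n) \<le> exp (- c * real n powr \<alpha>)" using tail elim by (simp add: E_def)
      then show ?case by (simp add: a_def b_def mult_left_mono)
    qed
  qed
  then have sa: "summable a" using sb by (rule summable_comparison_test_ev)
  have a0: "0 \<le> a n" for n by (simp add: a_def)
  have pw: "ennreal (norm (Y \<omega> powr p)) \<le> (\<Sum>n. ennreal ((real n + 1) powr p) * indicator (E n) \<omega>)"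
    if \<omega>: "\<omega> \<in> space P" for \<omega>
  proof -
    define m where "m = nat \<lfloor>Y \<omega>\<rfloor>"
    have y0: "0 \<le> Y \<omega>" using Y0 \<omega> by auto
    have rm: "real m = real_of_int \<lfloor>Y \<omega>\<rfloor>" using y0 by (simp add: m_def)
    have m1: "real m \<le> Y \<omega>" "Y \<omega> \<le> real m + 1" unfolding rm using floor_correct[of "Y \<omega>"] by linarith+
    have "Y \<omega> powr p \<le> (real m + 1) powr p" using m1 Y0 \<omega> p by (intro powr_mono2) auto
    then have "ennreal (norm (Y \<omega> powr p)) \<le> ennreal ((real m + 1) powr p) * indicator (E m) \<omega>"
      using \<omega> m1 by (simp add: E_def ennreal_leI)
    also have "\<dots> = (\<Sum>n\<in>{m}. ennreal ((real n + 1) powr p) * indicator (E n) \<omega>)" by (simp only: sum.empty sum.insert finite.emptyI empty_iff not_False_eq_True add_0_right)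
    also have "\<dots> \<le> (\<Sum>n. ennreal ((real n + 1) powr p) * indicator (E n) \<omega>)"
      by (intro sum_le_suminf) auto
    finally show ?thesis .
  qed
  have "(\<integral>\<^sup>+ \<omega>. ennreal (norm (Y \<omega> powr p)) \<partial>P) \<le> (\<integral>\<^sup>+ \<omega>. (\<Sum>n. ennreal ((real n + 1) powr p) * indicator (E n) \<omega>) \<partial>P)"
    using pw by (intro nn_integral_mono) auto
  also have "\<dots> = (\<Sum>n. \<integral>\<^sup>+ \<omega>. ennreal ((real n + 1) powr p) * indicator (E n) \<omega> \<partial>P)"
    using E by (intro nn_integral_suminf) auto
  also have "\<dots> = (\<Sum>n. ennreal (a n))"
    using E by (simp add: nn_integral_cmult_indicator emeasure_eq_measure a_def ennreal_mult)
  also have "\<dots> = ennreal (suminf a)" using a0 sa by (rule suminf_ennreal2)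
  also have "\<dots> < \<infinity>" by simp
  finally show ?thesis using Ym by (intro integrableI_bounded) auto
qed



lemma prm_zero_bound:
  assumes PRM: "poisson_random_measure P \<mu> N" and A: "A \<in> sets \<mu>"
    and c: "ennreal c \<le> emeasure \<mu> A"
  shows "measure P {\<omega>\<in>space P. emeasure (N \<omega>) A < 1} \<le> exp (- c)"
proof -
  interpret prob_space P using PRM by (simp add: poisson_random_measure_def)
  have Nm: "(\<lambda>\<omega>. emeasure (N \<omega>) A) \<in> borel_measurable P"
    using PRM A by (simp add: poisson_random_measure_def)
  define Z where "Z = {\<omega>\<in>space P. emeasure (N \<omega>) A < 1}"
  have Z: "Z \<in> sets P" unfolding Z_def using Nm by measurable
  show ?thesis
  proof (cases "c \<le> 0")
    case True
    have "prob Z \<le> 1" by simp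
    also have "1 \<le> exp (-c)" using True by simp
    finally show ?thesis by (simp add: Z_def)
  next
    case False
    then have c0: "0 < c" by simp
    show ?thesis
    proof (cases "emeasure \<mu> A = \<infinity>")
      case True
      then have ae: "AE \<omega> in P. emeasure (N \<omega>) A = \<infinity>"
        using PRM A by (simp add: poisson_random_measure_def)
      have "AE \<omega> in P. \<omega> \<notin> Z" using ae by eventually_elim (auto simp: Z_def)
      then have "Z \<in> null_sets P" using Z by (simp add: AE_iff_null_sets)
      then have "prob Z = 0" by (simp add: measure_def null_setsD1)
      then show ?thesis by (simp add: Z_def)
    next
      case False
      define lam where "lam = enn2real (emeasure \<mu> A)"
      have fin: "emeasure \<mu> A < \<infinity>" using False by (simp add: top.not_eq_extremum)
      have lam_eq: "emeasure \<mu> A = ennreal lam" using fin by (simp add: lam_def ennreal_enn2real_if)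
      have lam0: "0 \<le> lam" by (simp add: lam_def)
      have clam: "c \<le> lam" using c lam_eq lam0 by simp
      define E where "E k = {\<omega>\<in>space P. emeasure (N \<omega>) A = of_nat k}" for k :: nat
      have E: "E k \<in> sets P" for k unfolding E_def using Nm by measurable
      have pE: "prob (E k) = exp (- lam) * lam ^ k / fact k" for k
        using PRM A fin unfolding poisson_random_measure_def E_def lam_def by auto
      have disj: "disjoint_family E" unfolding disjoint_family_on_def E_def by auto
      have s1: "(\<lambda>k. prob (E k)) sums prob (\<Union>k. E k)"
        using E disj by (intro finite_measure_UNION) auto
      have "(\<lambda>k. exp (- lam) * (lam ^ k /\<^sub>R fact k)) sums (exp (- lam) * exp lam)"
        by (intro sums_mult exp_converges)
      then have s2: "(\<lambda>k. prob (E k)) sums 1" by (simp add: pE exp_minus field_simps)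
      have U1: "prob (\<Union>k. E k) = 1" using s1 s2 sums_unique2 by blast
      have "Z \<subseteq> E 0 \<union> (space P - (\<Union>k. E k))"
      proof
        fix \<omega> assume "\<omega> \<in> Z"
        then have w: "\<omega> \<in> space P" "emeasure (N \<omega>) A < 1" by (auto simp: Z_def)
        show "\<omega> \<in> E 0 \<union> (space P - (\<Union>k. E k))"
        proof (cases "\<omega> \<in> (\<Union>k. E k)")
          case True
          then obtain k where k: "emeasure (N \<omega>) A = of_nat k" by (auto simp: E_def)
          then have "k = 0" using w(2) by (cases k) auto
          then show ?thesis using w k by (auto simp: E_def)
        qed (use w in auto)
      qed
      then have "prob Z \<le> prob (E 0 \<union> (space P - (\<Union>k. E k)))"
        using E by (intro finite_measure_mono) auto
      also have "\<dots> \<le> prob (E 0) + prob (space P - (\<Union>k. E k))"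
        using E by (intro measure_Un_le) auto
      also have "prob (space P - (\<Union>k. E k)) = 0"
        using E U1 by (subst prob_compl) auto
      also have "prob (E 0) = exp (- lam)" by (simp add: pE)
      also have "exp (- lam) \<le> exp (- c)" using clam by simp
      finally show ?thesis by (simp add: Z_def)
    qed
  qed
qed



lemma ae_pos:
  assumes sets_eq: "\<forall>\<omega>\<in>space P. sets (N \<omega>) = sets \<mu>" and fm: "f \<in> borel_measurable \<mu>"
    and B0: "B0 \<in> sets \<mu>" and fpos: "\<forall>z\<in>B0. f z \<noteq> 0"
    and ae: "AE \<omega> in P. emeasure (N \<omega>) B0 = \<infinity>"
  shows "AE \<omega> in P. (\<integral>\<^sup>+ z. f z \<partial>N \<omega>) \<noteq> 0"
proof -
  have "\<forall>\<omega>\<in>space P. emeasure (N \<omega>) B0 = \<infinity> \<longrightarrow> (\<integral>\<^sup>+ z. f z \<partial>N \<omega>) \<noteq> 0"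
  proof (intro ballI impI notI)
    fix \<omega> assume w: "\<omega> \<in> space P" and inf: "emeasure (N \<omega>) B0 = \<infinity>"
      and X0: "(\<integral>\<^sup>+ z. f z \<partial>N \<omega>) = 0"
    have se: "sets (N \<omega>) = sets \<mu>" using sets_eq w by blast
    have fN: "f \<in> borel_measurable (N \<omega>)"
      using measurable_cong_sets[OF se refl, of borel] fm by blast
    have B0N: "B0 \<in> sets (N \<omega>)" using B0 se by blast
    have "AE z in N \<omega>. f z = 0" using nn_integral_0_iff_AE[OF fN] X0 by blast
    then have "AE z in N \<omega>. z \<notin> B0"
      by (rule AE_mp) (intro AE_I2 impI, use fpos in blast)
    then have "B0 \<in> null_sets (N \<omega>)" using AE_iff_null_sets[OF B0N] by blast
    then have "emeasure (N \<omega>) B0 = 0" by (rule null_setsD1)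
    then show False using inf by simp
  qed
  then show ?thesis using ae by (auto elim: AE_mp)
qed



lemma tsi_sets:
  assumes "S \<in> sets \<nu>"
  shows "{0..t} \<times> S \<in> sets (time_space_intensity \<nu>)"
proof -
  have "{0..t} \<in> sets (restrict_space lborel {0::real..})"
    by (subst sets_restrict_space) (rule image_eqI[where x="{0..t}"], auto)
  then show ?thesis unfolding time_space_intensity_def using assms by (intro pair_measureI) auto
qed

lemma tsi_emeasure:
  assumes sf: "sigma_finite_measure \<nu>" and t: "0 \<le> t" and S: "S \<in> sets \<nu>"
  shows "emeasure (time_space_intensity \<nu>) ({0..t} \<times> S) = ennreal t * emeasure \<nu> S"
proof -
  have I: "{0..t} \<in> sets (restrict_space lborel {0::real..})"
    by (subst sets_restrict_space) (rule image_eqI[where x="{0..t}"], auto)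
  have "emeasure (restrict_space lborel {0::real..}) {0..t} = emeasure lborel {0..t}"
    by (intro emeasure_restrict_space) auto
  also have "\<dots> = ennreal t" using t by simp
  finally have e: "emeasure (restrict_space lborel {0::real..}) {0..t} = ennreal t" .
  show ?thesis unfolding time_space_intensity_def
    using sigma_finite_measure.emeasure_pair_measure_Times[OF sf I S] e by simp
qed

lemma f_meas:
  fixes \<psi> :: "'x \<Rightarrow> real"
  assumes Oc: "Oc \<in> sets \<nu>" and \<psi>m: "\<psi> \<in> borel_measurable (restrict_space \<nu> Oc)"
  shows "(\<lambda>z. indicator ({0..t} \<times> Oc) z * ennreal (\<psi> (snd z))) \<in> borel_measurable (time_space_intensity \<nu>)"
proof -
  have "(\<lambda>u. ennreal (\<psi> u)) \<in> borel_measurable (restrict_space \<nu> Oc)"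
    using \<psi>m by measurable
  then have g: "(\<lambda>u. ennreal (\<psi> u) * indicator Oc u) \<in> borel_measurable \<nu>"
    using Oc by (subst borel_measurable_restrict_space_iff_ennreal[symmetric]) auto
  have I: "{0..t} \<in> sets (restrict_space lborel {0::real..})"
    by (subst sets_restrict_space) (rule image_eqI[where x="{0..t}"], auto)
  have "(\<lambda>z. indicator {0..t} (fst z) * (ennreal (\<psi> (snd z)) * indicator Oc (snd z)))
      \<in> borel_measurable (time_space_intensity \<nu>)"
    unfolding time_space_intensity_def
    apply (rule borel_measurable_times_ennreal)
     apply (rule measurable_compose[OF measurable_fst])
     apply (rule borel_measurable_indicator[OF I])
    apply (rule measurable_compose[OF measurable_snd g])
    done
  moreover have "\<And>z. indicator ({0..t} \<times> Oc) z * ennreal (\<psi> (snd z))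
      = indicator {0..t} (fst z) * (ennreal (\<psi> (snd z)) * indicator Oc (snd z))"
    by (auto simp: indicator_def)
  ultimately show ?thesis by simp
qed

theorem mainTheorem19:
  fixes P :: "'w measure" and \<nu> :: "'x measure"
    and N :: "'w \<Rightarrow> (real \<times> 'x) measure"
    and Ocal :: "'x set" and \<psi> :: "'x \<Rightarrow> real"
  assumes sigma_fin: "sigma_finite_measure \<nu>"
    and PRM: "poisson_random_measure P (time_space_intensity \<nu>) N"
    and O_meas: "Ocal \<in> sets \<nu>"
    and O_inf: "emeasure \<nu> Ocal = \<infinity>"
    and \<psi>_meas: "\<psi> \<in> borel_measurable (restrict_space \<nu> Ocal)"
    and \<psi>_pos: "\<forall>u\<in>Ocal. 0 < \<psi> u"
    and lim: "\<exists>\<alpha>::real. 0 < \<alpha> \<and> \<alpha> < 1 \<and> (\<exists>r1::real. r1 < 0 \<and>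
        (\<forall>\<^sub>F l in at_top. set_integrable \<nu> Ocal (\<lambda>u. exp (- l * \<psi> u) - 1)) \<and>
        ((\<lambda>l. (LINT u:Ocal|\<nu>. exp (- l * \<psi> u) - 1) / l powr \<alpha>) \<longlongrightarrow> r1) at_top)"
    and t_pos: "0 < (t::real)"
  shows "\<forall>p::real. 1 \<le> p \<longrightarrow>
      (let X = (\<lambda>\<omega>. \<integral>\<^sup>+ z. indicator ({0..t} \<times> Ocal) z * ennreal (\<psi> (snd z)) \<partial>(N \<omega>))
       in (\<lambda>\<omega>. enn2real (inverse (X \<omega>))) \<in> borel_measurable P \<and>
          (AE \<omega> in P. inverse (X \<omega>) < \<infinity>) \<and>
          integrable P (\<lambda>\<omega>. enn2real (inverse (X \<omega>)) powr p))"
proof (intro allI impI)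
  fix p :: real assume p: "1 \<le> p"
  define \<mu> where "\<mu> = time_space_intensity \<nu>"
  define f where "f z = indicator ({0..t} \<times> Ocal) z * ennreal (\<psi> (snd z))" for z
  define X where "X \<omega> = (\<integral>\<^sup>+ z. f z \<partial>(N \<omega>))" for \<omega>
  define Y where "Y \<omega> = enn2real (inverse (X \<omega>))" for \<omega>
  interpret prob_space P using PRM by (simp add: poisson_random_measure_def)
  have sets_eq: "\<And>\<omega>. \<omega> \<in> space P \<Longrightarrow> sets (N \<omega>) = sets \<mu>"
    using PRM by (simp add: poisson_random_measure_def \<mu>_def)
  have meas: "\<And>A. A \<in> sets \<mu> \<Longrightarrow> (\<lambda>\<omega>. emeasure (N \<omega>) A) \<in> borel_measurable P"
    using PRM by (simp add: poisson_random_measure_def \<mu>_def)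
  have fm: "f \<in> borel_measurable \<mu>" unfolding f_def \<mu>_def using O_meas \<psi>_meas by (rule f_meas)
  have Xm: "X \<in> borel_measurable P" unfolding X_def
    by (rule kernel_nn_integral_measurable[OF sets_eq meas fm])
  have Ym: "Y \<in> borel_measurable P" unfolding Y_def using Xm by measurable
  obtain \<alpha> r1 where \<alpha>: "0 < \<alpha>" "\<alpha> < 1" and r1: "r1 < 0"
    and int: "\<forall>\<^sub>F l in at_top. set_integrable \<nu> Ocal (\<lambda>u. exp (- l * \<psi> u) - 1)"
    and lm: "((\<lambda>l. (LINT u:Ocal|\<nu>. exp (- l * \<psi> u) - 1) / l powr \<alpha>) \<longlongrightarrow> r1) at_top"
    using lim by blast
  obtain \<eta> L0 where \<eta>: "0 < \<eta>" and L0: "0 < L0"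
    and lb: "\<forall>l\<ge>L0. ennreal (- r1/2 * l powr \<alpha>) \<le> emeasure \<nu> {u\<in>Ocal. \<eta>/l \<le> \<psi> u}"
    using measure_lower_bound[OF O_meas \<psi>_meas \<psi>_pos \<alpha> r1 int lm] by blast
  define S where "S l = {u\<in>Ocal. \<eta>/l \<le> \<psi> u}" for l
  define B where "B l = {0..t} \<times> S l" for l
  have S: "S l \<in> sets \<nu>" for l unfolding S_def by (rule sets_level[OF O_meas \<psi>_meas])
  have B: "B l \<in> sets \<mu>" for l unfolding B_def \<mu>_def by (rule tsi_sets[OF S])
  define c0 where "c0 = - r1/2"
  have c0: "0 < c0" using r1 by (simp add: c0_def)
  have muB: "ennreal (t * c0 * l powr \<alpha>) \<le> emeasure \<mu> (B l)" if l: "L0 \<le> l" for l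
  proof -
    have "ennreal (t * c0 * l powr \<alpha>) = ennreal t * ennreal (c0 * l powr \<alpha>)"
      using t_pos by (simp add: ennreal_mult' mult.assoc)
    also have "\<dots> \<le> ennreal t * emeasure \<nu> (S l)"
      using lb l by (intro mult_left_mono) (auto simp: S_def c0_def)
    also have "\<dots> = emeasure \<mu> (B l)"
      unfolding \<mu>_def B_def using tsi_emeasure[OF sigma_fin _ S] t_pos by simp
    finally show ?thesis .
  qed
  have XB: "emeasure (N \<omega>) (B l) < 1" if \<omega>: "\<omega> \<in> space P" and l: "0 < l" and Xl: "X \<omega> < ennreal (\<eta>/l)" for \<omega> l
  proof (rule ccontr)
    assume "\<not> emeasure (N \<omega>) (B l) < 1"
    then have N1: "1 \<le> emeasure (N \<omega>) (B l)" by simp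
    have BN: "B l \<in> sets (N \<omega>)" using B sets_eq[OF \<omega>] by simp
    have "ennreal (\<eta>/l) = ennreal (\<eta>/l) * 1" by simp
    also have "\<dots> \<le> ennreal (\<eta>/l) * emeasure (N \<omega>) (B l)" using N1 by (intro mult_left_mono) auto
    also have "\<dots> = (\<integral>\<^sup>+ z. ennreal (\<eta>/l) * indicator (B l) z \<partial>N \<omega>)"
      using BN by (simp add: nn_integral_cmult_indicator)
    also have "\<dots> \<le> X \<omega>" unfolding X_def
    proof (intro nn_integral_mono)
      fix z show "ennreal (\<eta>/l) * indicator (B l) z \<le> f z"
        by (cases "z \<in> B l") (auto simp: B_def S_def f_def indicator_def ennreal_leI)
    qed
    finally show False using Xl by simp
  qed
  have tailX: "prob {\<omega>\<in>space P. X \<omega> < ennreal (\<eta>/l)} \<le> exp (- (t * c0 * l powr \<alpha>))" if l: "L0 \<le> l" for l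
  proof -
    have "prob {\<omega>\<in>space P. X \<omega> < ennreal (\<eta>/l)} \<le> prob {\<omega>\<in>space P. emeasure (N \<omega>) (B l) < 1}"
      using XB l L0 meas[OF B] by (intro finite_measure_mono) (auto, measurable)
    also have "\<dots> \<le> exp (- (t * c0 * l powr \<alpha>))"
      using PRM B muB[OF l] unfolding \<mu>_def by (intro prm_zero_bound) auto
    finally show ?thesis .
  qed
  define c where "c = t * c0 * (\<eta>/2) powr \<alpha>"
  have c: "0 < c" using t_pos c0 \<eta> by (simp add: c_def)
  have tail: "\<forall>y\<ge>2*L0/\<eta>. prob {\<omega>\<in>space P. y \<le> Y \<omega>} \<le> exp (- c * y powr \<alpha>)"
  proof (intro allI impI)
    fix y assume y: "2*L0/\<eta> \<le> y"
    define l where "l = \<eta>*y/2"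
    have l: "L0 \<le> l" using y \<eta> by (simp add: l_def field_simps)
    have y0: "0 < y" using y L0 \<eta> by (smt (verit) divide_pos_pos)
    have sub: "{\<omega>\<in>space P. y \<le> Y \<omega>} \<subseteq> {\<omega>\<in>space P. X \<omega> < ennreal (\<eta>/l)}"
    proof safe
      fix \<omega> assume w: "\<omega> \<in> space P" "y \<le> Y \<omega>"
      show "X \<omega> < ennreal (\<eta>/l)"
      proof (cases "X \<omega>" rule: ennreal_cases)
        case (real x)
        show ?thesis
        proof (cases "x = 0")
          case True then show ?thesis using w y0 real by (simp add: Y_def)
        next
          case False
          then have x0: "0 < x" using real by simp
          have "Y \<omega> = 1/x" using x0 real by (simp add: Y_def inverse_ennreal divide_inverse)
          then have "y \<le> 1/x" using w by simp
          then have "x \<le> 1/y" using x0 y0 by (simp add: field_simps)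
          also have "\<dots> < \<eta>/l" using y0 \<eta> by (simp add: l_def field_simps)
          finally show ?thesis using real by (simp add: ennreal_lessI)
        qed
      next
        case top then show ?thesis using w y0 by (simp add: Y_def)
      qed
    qed
    have "prob {\<omega>\<in>space P. y \<le> Y \<omega>} \<le> prob {\<omega>\<in>space P. X \<omega> < ennreal (\<eta>/l)}"
      using sub Xm by (intro finite_measure_mono) (auto, measurable)
    also have "\<dots> \<le> exp (- (t * c0 * l powr \<alpha>))" by (rule tailX[OF l])
    also have "l powr \<alpha> = (\<eta>/2) powr \<alpha> * y powr \<alpha>"
      unfolding l_def using \<eta> y0 by (simp add: powr_mult[symmetric] mult.commute)
    finally show "prob {\<omega>\<in>space P. y \<le> Y \<omega>} \<le> exp (- c * y powr \<alpha>)"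
      by (simp add: c_def mult.assoc)
  qed
  have Y0: "\<forall>\<omega>\<in>space P. 0 \<le> Y \<omega>" by (simp add: Y_def)
  have integ: "integrable P (\<lambda>\<omega>. Y \<omega> powr p)"
    using integrable_tail[OF prob_space_axioms Ym Y0 c \<alpha>(1) _ tail] p by simp
  define B0 where "B0 = {0..t} \<times> Ocal"
  have B0: "B0 \<in> sets \<mu>" unfolding B0_def \<mu>_def by (rule tsi_sets[OF O_meas])
  have muB0: "emeasure \<mu> B0 = \<infinity>"
    unfolding B0_def \<mu>_def using tsi_emeasure[OF sigma_fin _ O_meas, of t] t_pos O_inf
    by (simp add: ennreal_mult_top)
  have aeB0: "AE \<omega> in P. emeasure (N \<omega>) B0 = \<infinity>"
  proof -
    have "\<forall>A\<in>sets \<mu>. emeasure \<mu> A = \<infinity> \<longrightarrow> (AE \<omega> in P. emeasure (N \<omega>) A = \<infinity>)"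
      using PRM unfolding \<mu>_def poisson_random_measure_def by blast
    then show ?thesis using B0 muB0 by blast
  qed
  have fpos: "\<forall>z\<in>B0. f z \<noteq> 0"
  proof (intro ballI notI)
    fix z assume z: "z \<in> B0" "f z = 0"
    then have "0 < \<psi> (snd z)" using \<psi>_pos by (auto simp: B0_def)
    moreover have "f z = ennreal (\<psi> (snd z))" using z(1) by (simp add: f_def B0_def)
    ultimately show False using z(2) by simp
  qed
  have "AE \<omega> in P. X \<omega> \<noteq> 0" unfolding X_def
    by (rule ae_pos[OF _ fm B0 fpos aeB0]) (use sets_eq in blast)
  then have ae: "AE \<omega> in P. inverse (X \<omega>) < \<infinity>"
    by eventually_elim (simp add: less_top[symmetric])
  have main: "Y \<in> borel_measurable P \<and> (AE \<omega> in P. inverse (X \<omega>) < \<infinity>) \<and> integrable P (\<lambda>\<omega>. Y \<omega> powr p)"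
    using Ym ae integ by blast
  show "let X = (\<lambda>\<omega>. \<integral>\<^sup>+ z. indicator ({0..t} \<times> Ocal) z * ennreal (\<psi> (snd z)) \<partial>(N \<omega>))
       in (\<lambda>\<omega>. enn2real (inverse (X \<omega>))) \<in> borel_measurable P \<and>
          (AE \<omega> in P. inverse (X \<omega>) < \<infinity>) \<and>
          integrable P (\<lambda>\<omega>. enn2real (inverse (X \<omega>)) powr p)"
    using main unfolding Let_def Y_def X_def f_def by simp
qed


end
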